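(* Consider $n$ processes running the Median-based Byzantine Agreement algorithm (described in the context) with any parameter $\alpha$ satisfying $0 \le \alpha < \lceil n/6 \rceil - 1$, in a system in which fewer than $\lfloor n/3 \rfloor$ processes are Byzantine. Then the algorithm satisfies interval validity: letting $T$ be the multiset of inputs of the non-faulty processes, every value $d$ output by a non-faulty process satisfies $d \in \{\min T, \dots, \max T\}$.
   Context: System model: $n$ processes $p_1,\dots,p_n$ communicate over a complete network in fully synchronous rounds (every message sent in a round is delivered before the next round); the receiver of a message knows its sender. A Byzantine (faulty) process may deviate arbitrarily from the protocol, e.g. send different messages to different processes or omit messages; the other processes are non-faulty. Each process $p_i$ has an input value $v_i$ from a totally ordered domain $V$ (integers); $\bot \notin V$ is a special default value. WeakMVBA: a Byzantine agreement protocol (tolerating the given number of Byzantine processes) in which each process has an input and all non-faulty processes terminate with: (consistency) the same decision value; (weak validity) if all non-faulty processes have the same input $v$, the decision is $v$; otherwise the decision is some value of $V\cup\{\bot\}$. Median-based Byzantine Agreement algorithm with parameter $\alpha$, run by a process with input $v$: (1) send $v$ to all processes (including itself); initialize an array $A[1..n]$ to $\bot$ and set $A[i]$ to the value received from $p_i$. (2) For each $i=1,\dots,n$, in parallel, run an instance of WeakMVBA in which this process uses input $A[i]$, and replace $A[i]$ by the decision of that instance. (3) Output select\_value$(A)$, defined as: delete all $\bot$ entries of $A$ to obtain a list $A_{\not\bot}$ of length $k$; let $C[u]$ be the number of occurrences of $u$ in $A_{\not\bot}$ and let $m$ be a value maximizing $C[m]$ (ties broken by a fixed deterministic rule); if $C[m]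 \ge \lfloor k/3\rfloor + 1 + \alpha$, output $m$; otherwise sort $A_{\not\bot}$ in nondecreasing order and output its median element (the entry at position $\lfloor k/2 \rfloor$; for even $k$ the lower of the two middle values). *)

theory Defs
  imports Complex_Main
begin

text \<open>Processes are p_1..p_n, indexed by {1..n}. Values V are integers, the default
  value bot is None. An array A[1..n] over V plus bot is a function nat => int option.\<close>

definition non_bot_list :: "nat \<Rightarrow> (nat \<Rightarrow> int option) \<Rightarrow> int list" where
  "non_bot_list n A = map the (filter (\<lambda>x. x \<noteq> None) (map A [1..<n+1]))"

definition is_mode_rule :: "(int list \<Rightarrow> int) \<Rightarrow> bool" where
  "is_mode_rule pick \<longleftrightarrow>
     (\<forall>xs. xs \<noteq> [] \<longrightarrow> pick xs \<in> set xs \<and> (\<forall>u. count_list xs u \<le> count_list xs (pick xs)))"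

text \<open>select_value(A) with parameter alpha and tie-breaking rule pick. The median is
  the lower middle element of the sorted list (0-indexed position (k-1) div 2).\<close>
definition select_value :: "(int list \<Rightarrow> int) \<Rightarrow> int \<Rightarrow> nat \<Rightarrow> (nat \<Rightarrow> int option) \<Rightarrow> int" where
  "select_value pick \<alpha> n A =
     (let L = non_bot_list n A; k = length L; m = pick L in
      if int (count_list L m) \<ge> int (k div 3) + 1 + \<alpha> then m
      else sort L ! ((k - 1) div 2))"

end

theory Submission
  imports Defs
begin

lemma filter_the_aux:
  "filter P (map the (filter (\<lambda>x. x \<noteq> None) xs)) =
   map the (filter (\<lambda>y. y \<noteq> None \<and> P (the y)) xs)"
  by (induction xs) auto

lemma length_filter_mono:
  "(\<And>x. P x \<Longrightarrow> Q x) \<Longrightarrow> length (filter P xs) \<le> length (filter Q xs)"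
  by (induction xs) auto

lemma cnt_nbl:
  "length (filter P (non_bot_list n A)) = card {i\<in>{1..n}. A i \<noteq> None \<and> P (the (A i))}"
proof -
  have "length (filter P (non_bot_list n A)) =
        length (filter (\<lambda>i. A i \<noteq> None \<and> P (the (A i))) [1..<n+1])"
    unfolding non_bot_list_def filter_the_aux by (simp add: filter_map comp_def)
  also have "\<dots> = card (set (filter (\<lambda>i. A i \<noteq> None \<and> P (the (A i))) [1..<n+1]))"
    by (rule distinct_card[symmetric]) simp
  also have "set (filter (\<lambda>i. A i \<noteq> None \<and> P (the (A i))) [1..<n+1]) =
     {i\<in>{1..n}. A i \<noteq> None \<and> P (the (A i))}" by auto
  finally show ?thesis .
qed

lemma len_nbl:
  "length (non_bot_list n A) = card {i\<in>{1..n}. A i \<noteq> None}"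
  using cnt_nbl[of "\<lambda>_. True" n A] by simp

lemma filter_sort_len: "length (filter P (sort xs)) = length (filter P (xs::int list))"
  by (simp add: filter_sort)

lemma sorted_low:
  fixes S :: "int list"
  assumes "sorted S" "p < length S" "S ! p < lo"
  shows "p + 1 \<le> length (filter (\<lambda>x. x < lo) S)"
proof -
  have "{0..p} \<subseteq> {i. i < length S \<and> S ! i < lo}"
    using assms sorted_nth_mono[OF assms(1)] by fastforce
  then have "card {0..p} \<le> card {i. i < length S \<and> S ! i < lo}"
    by (intro card_mono) auto
  then show ?thesis by (simp add: length_filter_conv_card)
qed

lemma sorted_high:
  fixes S :: "int list"
  assumes "sorted S" "p < length S" "S ! p > hi"
  shows "length S - p \<le> length (filter (\<lambda>x. x > hi) S)"
proof -
  have "{p..<length S} \<subseteq> {i. i < length S \<and> S ! i > hi}"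
    using assms sorted_nth_mono[OF assms(1)] by fastforce
  then have "card {p..<length S} \<le> card {i. i < length S \<and> S ! i > hi}"
    by (intro card_mono) auto
  then show ?thesis by (simp add: length_filter_conv_card)
qed

theorem lemma2:
  fixes n :: nat and \<alpha> :: int
    and F :: "nat set"                       \<comment> \<open>Byzantine processes\<close>
    and v :: "nat \<Rightarrow> int"                    \<comment> \<open>inputs\<close>
    and recv :: "nat \<Rightarrow> nat \<Rightarrow> int option"   \<comment> \<open>recv j i: value p_j received from p_i in step 1 (None = bot)\<close>
    and dec :: "nat \<Rightarrow> nat \<Rightarrow> int option"    \<comment> \<open>dec j i: decision of p_j in WeakMVBA instance i\<close>
    and pick :: "int list \<Rightarrow> int"            \<comment> \<open>fixed deterministic tie-breaking rule\<close>
  assumes alpha_nonneg: "0 \<le> \<alpha>"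
    and alpha_bound: "\<alpha> < \<lceil>real n / 6\<rceil> - 1"
    and F_sub: "F \<subseteq> {1..n}"
    and few_faulty: "card F < n div 3"
    and pick: "is_mode_rule pick"
    and step1: "\<forall>j\<in>{1..n} - F. \<forall>i\<in>{1..n} - F. recv j i = Some (v i)"
    and consistency: "\<forall>i\<in>{1..n}. \<forall>j\<in>{1..n} - F. \<forall>j'\<in>{1..n} - F. dec j i = dec j' i"
    and weak_validity: "\<forall>i\<in>{1..n}. \<forall>x.
          (\<forall>j\<in>{1..n} - F. recv j i = Some x) \<longrightarrow> (\<forall>j\<in>{1..n} - F. dec j i = Some x)"
  shows "\<forall>j\<in>{1..n} - F.
           Min (v ` ({1..n} - F)) \<le> select_value pick \<alpha> n (dec j) \<and>
           select_value pick \<alpha> n (dec j) \<le> Max (v ` ({1..n} - F))"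
proof
  fix j assume j: "j \<in> {1..n} - F"
  define A where "A = dec j"
  define C where "C = {1..n} - F"
  define lo where "lo = Min (v ` C)"
  define hi where "hi = Max (v ` C)"
  define f where "f = card F"
  define B where "B = {i\<in>F. A i \<noteq> None}"
  define b where "b = card B"
  define L where "L = non_bot_list n A"
  define k where "k = length L"
  have finF: "finite F" using F_sub finite_subset by blast
  have cardC: "card C = n - f" unfolding C_def f_def using F_sub finF
    by (simp add: card_Diff_subset)
  have corr: "A i = Some (v i)" if "i \<in> C" for i
    using weak_validity step1 that j unfolding A_def C_def by blast
  have finC: "finite C" unfolding C_def by simp
  have Cne: "C \<noteq> {}" using cardC few_faulty f_def by auto
  have lohi: "lo \<le> v i \<and> v i \<le> hi" if "i \<in> C" for i
    unfolding lo_def hi_def using finC that by auto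
  have bf: "b \<le> f" unfolding b_def f_def B_def using finF by (intro card_mono) auto
  have kk: "k = n - f + b"
  proof -
    have "{i\<in>{1..n}. A i \<noteq> None} = C \<union> B" using corr F_sub unfolding C_def B_def by auto
    moreover have "C \<inter> B = {}" unfolding C_def B_def by auto
    moreover have "finite B" unfolding B_def using finF by simp
    ultimately show ?thesis unfolding k_def L_def len_nbl using finC cardC b_def
      by (simp add: card_Un_disjoint)
  qed
  have nf: "3 * f + 3 \<le> n" using few_faulty f_def by linarith
  have low: "length (filter (\<lambda>x. x < lo) L) \<le> b"
  proof -
    have "{i\<in>{1..n}. A i \<noteq> None \<and> the (A i) < lo} \<subseteq> B"
      using corr lohi unfolding B_def C_def by fastforce
    then show ?thesis unfolding L_def cnt_nbl b_def B_def using finF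
      by (intro card_mono) auto
  qed
  have high: "length (filter (\<lambda>x. x > hi) L) \<le> b"
  proof -
    have "{i\<in>{1..n}. A i \<noteq> None \<and> the (A i) > hi} \<subseteq> B"
      using corr lohi unfolding B_def C_def by fastforce
    then show ?thesis unfolding L_def cnt_nbl b_def B_def using finF
      by (intro card_mono) auto
  qed
  have Lne: "L \<noteq> []" using kk nf k_def by auto
  define m where "m = pick L"
  have mode_ok: "lo \<le> m \<and> m \<le> hi" if cnt: "int (count_list L m) \<ge> int (k div 3) + 1 + \<alpha>"
  proof -
    have "b \<le> k div 3" using kk bf nf by linarith
    then have bc: "b < count_list L m" using cnt alpha_nonneg by linarith
    show ?thesis
    proof (rule ccontr)
      assume "\<not> ?thesis"
      then consider "m < lo" | "m > hi" by linarith
      then show False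
      proof cases
        case 1
        have "length (filter ((=) m) L) \<le> length (filter (\<lambda>x. x < lo) L)"
          using 1 by (intro length_filter_mono) auto
        then show False using low bc by (simp add: count_list_eq_length_filter)
      next
        case 2
        have "length (filter ((=) m) L) \<le> length (filter (\<lambda>x. x > hi) L)"
          using 2 by (intro length_filter_mono) auto
        then show False using high bc by (simp add: count_list_eq_length_filter)
      qed
    qed
  qed
  define p where "p = (k - 1) div 2"
  have med_ok: "lo \<le> sort L ! p \<and> sort L ! p \<le> hi"
  proof -
    have pk: "p < length (sort L)" using Lne unfolding p_def k_def
      by (cases L) auto
    have s: "sorted (sort L)" by simp
    show ?thesis
    proof (rule ccontr)
      assume "\<not> ?thesis"
      then consider "sort L ! p < lo" | "sort L ! p > hi" by linarith
      then show False
      proof cases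
        case 1
        from sorted_low[OF s pk 1] low show False
          unfolding filter_sort_len using kk bf nf p_def by simp
      next
        case 2
        from sorted_high[OF s pk 2] high show False
          unfolding filter_sort_len using kk bf nf p_def k_def by simp
      qed
    qed
  qed
  have "lo \<le> select_value pick \<alpha> n A \<and> select_value pick \<alpha> n A \<le> hi"
    unfolding select_value_def Let_def L_def[symmetric] k_def[symmetric] m_def[symmetric]
      p_def[symmetric]
    using mode_ok med_ok by auto
  then show "Min (v ` ({1..n} - F)) \<le> select_value pick \<alpha> n (dec j) \<and>
           select_value pick \<alpha> n (dec j) \<le> Max (v ` ({1..n} - F))"
    unfolding A_def lo_def hi_def C_def .
qed

end
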